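(* Let $Q$ be a finite commutative A-loop of odd order, and define $x\circ y = \big(x^{-1}\backslash (xy^2)\big)^{1/2}$. A subloop $K$ of $(Q,\circ)$ is a subloop of $Q$ if and only if $K\varphi = K$ for each $\varphi\in \mathrm{Inn}(Q)\cap\langle L_x : x\in K\rangle$.
   Context: A loop is a set with a binary operation and neutral element $1$ in which all left translations $L_x:y\mapsto xy$ and right translations are bijections; $\mathrm{Mlt}(Q)$ is the group they generate and $\mathrm{Inn}(Q)$ the stabilizer of $1$ in it. A commutative A-loop is a commutative loop all of whose inner mappings are automorphisms. $x\backslash y$ is the unique $z$ with $xz=y$, $x^{-1}=x\backslash 1$. In a finite commutative loop of odd order the squaring map is a bijection, and $z^{1/2}$ denotes the unique $w$ with $w^2=z$; $(Q,\circ)$ is then a loop. $\langle L_x : x\in K\rangle$ is the subgroup of $\mathrm{Mlt}(Q)$ generated by the left translations of $Q$ by elements of $K$. *)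

theory Defs
  imports Main
begin

definition loop :: "'a set \<Rightarrow> ('a \<Rightarrow> 'a \<Rightarrow> 'a) \<Rightarrow> 'a \<Rightarrow> bool" where
  "loop Q m e \<longleftrightarrow> e \<in> Q \<and> (\<forall>x\<in>Q. \<forall>y\<in>Q. m x y \<in> Q)
     \<and> (\<forall>x\<in>Q. m e x = x \<and> m x e = x)
     \<and> (\<forall>x\<in>Q. bij_betw (m x) Q Q \<and> bij_betw (\<lambda>y. m y x) Q Q)"

definition subloop :: "'a set \<Rightarrow> ('a \<Rightarrow> 'a \<Rightarrow> 'a) \<Rightarrow> 'a \<Rightarrow> 'a set \<Rightarrow> bool" where
  "subloop Q m e K \<longleftrightarrow> K \<subseteq> Q \<and> loop K m e"

text \<open>Permutations of Q are represented as functions that are bijective on Q and the identity off Q.\<close>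
definition Ltr :: "'a set \<Rightarrow> ('a \<Rightarrow> 'a \<Rightarrow> 'a) \<Rightarrow> 'a \<Rightarrow> 'a \<Rightarrow> 'a" where
  "Ltr Q m x = (\<lambda>y. if y \<in> Q then m x y else y)"

definition Rtr :: "'a set \<Rightarrow> ('a \<Rightarrow> 'a \<Rightarrow> 'a) \<Rightarrow> 'a \<Rightarrow> 'a \<Rightarrow> 'a" where
  "Rtr Q m x = (\<lambda>y. if y \<in> Q then m y x else y)"

definition pinv :: "'a set \<Rightarrow> ('a \<Rightarrow> 'a) \<Rightarrow> 'a \<Rightarrow> 'a" where
  "pinv Q f = (\<lambda>y. if y \<in> Q then the_inv_into Q f y else y)"

inductive_set gen_perm :: "'a set \<Rightarrow> ('a \<Rightarrow> 'a) set \<Rightarrow> ('a \<Rightarrow> 'a) set"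
  for Q :: "'a set" and S :: "('a \<Rightarrow> 'a) set" where
  gen_id: "id \<in> gen_perm Q S"
| gen_mult: "f \<in> S \<Longrightarrow> g \<in> gen_perm Q S \<Longrightarrow> f \<circ> g \<in> gen_perm Q S"
| gen_inv: "f \<in> S \<Longrightarrow> g \<in> gen_perm Q S \<Longrightarrow> pinv Q f \<circ> g \<in> gen_perm Q S"

definition Mlt :: "'a set \<Rightarrow> ('a \<Rightarrow> 'a \<Rightarrow> 'a) \<Rightarrow> ('a \<Rightarrow> 'a) set" where
  "Mlt Q m = gen_perm Q ((Ltr Q m ` Q) \<union> (Rtr Q m ` Q))"

definition Inn :: "'a set \<Rightarrow> ('a \<Rightarrow> 'a \<Rightarrow> 'a) \<Rightarrow> 'a \<Rightarrow> ('a \<Rightarrow> 'a) set" where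
  "Inn Q m e = {\<phi> \<in> Mlt Q m. \<phi> e = e}"

definition automorphism :: "'a set \<Rightarrow> ('a \<Rightarrow> 'a \<Rightarrow> 'a) \<Rightarrow> ('a \<Rightarrow> 'a) \<Rightarrow> bool" where
  "automorphism Q m \<phi> \<longleftrightarrow> bij_betw \<phi> Q Q \<and> (\<forall>x\<in>Q. \<forall>y\<in>Q. \<phi> (m x y) = m (\<phi> x) (\<phi> y))"

definition comm_A_loop :: "'a set \<Rightarrow> ('a \<Rightarrow> 'a \<Rightarrow> 'a) \<Rightarrow> 'a \<Rightarrow> bool" where
  "comm_A_loop Q m e \<longleftrightarrow> loop Q m e \<and> (\<forall>x\<in>Q. \<forall>y\<in>Q. m x y = m y x)
     \<and> (\<forall>\<phi>\<in>Inn Q m e. automorphism Q m \<phi>)"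

definition ldiv :: "'a set \<Rightarrow> ('a \<Rightarrow> 'a \<Rightarrow> 'a) \<Rightarrow> 'a \<Rightarrow> 'a \<Rightarrow> 'a" where
  "ldiv Q m x y = (THE z. z \<in> Q \<and> m x z = y)"

definition linv :: "'a set \<Rightarrow> ('a \<Rightarrow> 'a \<Rightarrow> 'a) \<Rightarrow> 'a \<Rightarrow> 'a \<Rightarrow> 'a" where
  "linv Q m e x = ldiv Q m x e"

definition sqroot :: "'a set \<Rightarrow> ('a \<Rightarrow> 'a \<Rightarrow> 'a) \<Rightarrow> 'a \<Rightarrow> 'a" where
  "sqroot Q m z = (THE w. w \<in> Q \<and> m w w = z)"

definition circ_op :: "'a set \<Rightarrow> ('a \<Rightarrow> 'a \<Rightarrow> 'a) \<Rightarrow> 'a \<Rightarrow> 'a \<Rightarrow> 'a \<Rightarrow> 'a" where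
  "circ_op Q m e x y = sqroot Q m (ldiv Q m (linv Q m e x) (m x (m y y)))"

end

theory Submission
  imports Defs
begin

lemma inv_even:
  assumes "finite S" "\<forall>y\<in>S. r y \<in> S \<and> r (r y) = y \<and> r y \<noteq> y"
  shows "even (card S)"
  using assms
proof (induction "card S" arbitrary: S rule: less_induct)
  case less
  show ?case
  proof (cases "S = {}")
    case True thus ?thesis by simp
  next
    case False
    then obtain y where y: "y \<in> S" by blast
    let ?S' = "S - {y, r y}"
    have ry: "r y \<in> S" "r y \<noteq> y" using less.prems y by auto
    have c: "card S = card ?S' + 2"
    proof -
      have "card ?S' = card S - card {y, r y}"
        by (rule card_Diff_subset) (use y ry in auto)
      moreover have "card {y, r y} = 2" using ry by simp
      moreover have "card {y, r y} \<le> card S"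
        by (rule card_mono) (use less.prems(1) y ry in auto)
      ultimately show ?thesis by simp
    qed
    have yy: "r (r y) = y" using less.prems(2) y by blast
    have "\<forall>z\<in>?S'. r z \<in> ?S' \<and> r (r z) = z \<and> r z \<noteq> z"
    proof
      fix z assume z: "z \<in> ?S'"
      then have zS: "z \<in> S" "z \<noteq> y" "z \<noteq> r y" by auto
      have p: "r z \<in> S" "r (r z) = z" "r z \<noteq> z" using less.prems(2) zS(1) by auto
      have "r z \<noteq> y"
      proof
        assume "r z = y" then have "r (r z) = r y" by simp
        then show False using p(2) zS(3) by simp
      qed
      moreover have "r z \<noteq> r y"
      proof
        assume "r z = r y" then have "r (r z) = r (r y)" by simp
        then show False using p(2) yy zS(2) by simp
      qed
      ultimately show "r z \<in> ?S' \<and> r (r z) = z \<and> r z \<noteq> z" using p by auto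
    qed
    then have "even (card ?S')" using less.hyps[of ?S'] c less.prems(1) by auto
    then show ?thesis using c by simp
  qed
qed

lemma gen_mono: "f \<in> gen_perm Q S \<Longrightarrow> S \<subseteq> S' \<Longrightarrow> f \<in> gen_perm Q S'"
  by (induction rule: gen_perm.induct) (auto intro: gen_perm.intros)

lemma funpow_gen: "f \<in> S \<Longrightarrow> f ^^ n \<in> gen_perm Q S"
  by (induction n) (auto intro: gen_perm.intros)

locale cal =
  fixes Q :: "'a set" and m :: "'a \<Rightarrow> 'a \<Rightarrow> 'a" and e :: 'a
  assumes A: "comm_A_loop Q m e" and fin: "finite Q" and oddQ: "odd (card Q)"
begin

lemma lp: "loop Q m e" using A by (simp add: comm_A_loop_def)
lemma e_in: "e \<in> Q" using lp by (simp add: loop_def)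
lemma cl: "x \<in> Q \<Longrightarrow> y \<in> Q \<Longrightarrow> m x y \<in> Q" using lp by (simp add: loop_def)
lemma lu: "x \<in> Q \<Longrightarrow> m e x = x" using lp by (simp add: loop_def)
lemma ru: "x \<in> Q \<Longrightarrow> m x e = x" using lp by (simp add: loop_def)
lemma comm: "x \<in> Q \<Longrightarrow> y \<in> Q \<Longrightarrow> m x y = m y x" using A by (simp add: comm_A_loop_def)
lemma bijL: "x \<in> Q \<Longrightarrow> bij_betw (m x) Q Q" using lp by (simp add: loop_def)
lemma canc: "\<lbrakk>x\<in>Q; y\<in>Q; z\<in>Q; m x y = m x z\<rbrakk> \<Longrightarrow> y = z"
  using bijL[of x] by (auto simp: bij_betw_def inj_on_def)
lemma ex_div: "\<lbrakk>x\<in>Q; b\<in>Q\<rbrakk> \<Longrightarrow> \<exists>z\<in>Q. m x z = b"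
proof -
  assume x: "x\<in>Q" and b: "b\<in>Q"
  have "b \<in> m x ` Q" using bijL[OF x] b by (simp add: bij_betw_def)
  then show ?thesis by blast
qed
lemma ldiv_eq: "\<lbrakk>x\<in>Q; z\<in>Q; m x z = b\<rbrakk> \<Longrightarrow> ldiv Q m x b = z"
  unfolding ldiv_def by (rule the_equality) (use canc in blast)+
lemma ldiv: "\<lbrakk>x\<in>Q; b\<in>Q\<rbrakk> \<Longrightarrow> ldiv Q m x b \<in> Q \<and> m x (ldiv Q m x b) = b"
  using ex_div ldiv_eq by metis
lemma ldiv_cancel: "\<lbrakk>x\<in>Q; z\<in>Q\<rbrakk> \<Longrightarrow> ldiv Q m x (m x z) = z"
  by (rule ldiv_eq) auto

lemma pinv_Ltr: assumes a: "a\<in>Q" and z: "z\<in>Q"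
  shows "pinv Q (Ltr Q m a) z = ldiv Q m a z"
proof -
  have inj: "inj_on (Ltr Q m a) Q" unfolding inj_on_def Ltr_def using canc a by auto
  have "the_inv_into Q (Ltr Q m a) z = ldiv Q m a z"
    by (rule the_inv_into_f_eq[OF inj]) (use ldiv[OF a z] in \<open>auto simp: Ltr_def\<close>)
  thus ?thesis using z by (simp add: pinv_def)
qed

lemma sq_surj: assumes z: "z\<in>Q" shows "\<exists>w\<in>Q. m w w = z"
proof (rule ccontr)
  assume no: "\<not> (\<exists>w\<in>Q. m w w = z)"
  have "even (card Q)"
  proof (rule inv_even[OF fin, of "\<lambda>y. ldiv Q m y z"], rule ballI)
    fix y assume y: "y\<in>Q"
    have d: "ldiv Q m y z \<in> Q" "m y (ldiv Q m y z) = z" using ldiv[OF y z] by auto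
    have "m (ldiv Q m y z) y = z" using comm[OF d(1) y] d(2) by simp
    then have "ldiv Q m (ldiv Q m y z) z = y" by (rule ldiv_eq[OF d(1) y])
    moreover have "ldiv Q m y z \<noteq> y" using d no y by auto
    ultimately show "ldiv Q m y z \<in> Q \<and> ldiv Q m (ldiv Q m y z) z = y \<and> ldiv Q m y z \<noteq> y"
      using d by auto
  qed
  thus False using oddQ by simp
qed

lemma sq_inj: "inj_on (\<lambda>w. m w w) Q"
proof -
  have "(\<lambda>w. m w w) ` Q = Q" using sq_surj cl by force
  then show ?thesis by (simp add: inj_on_iff_eq_card fin)
qed

lemma sqroot_eq: "\<lbrakk>w\<in>Q; m w w = z\<rbrakk> \<Longrightarrow> sqroot Q m z = w"
  unfolding sqroot_def by (rule the_equality) (use sq_inj in \<open>auto simp: inj_on_def\<close>)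

lemma sqroot: "z\<in>Q \<Longrightarrow> sqroot Q m z \<in> Q \<and> m (sqroot Q m z) (sqroot Q m z) = z"
  using sq_surj sqroot_eq by metis

lemma aut: "\<phi> \<in> Mlt Q m \<Longrightarrow> \<phi> e = e \<Longrightarrow> automorphism Q m \<phi>"
  using A by (auto simp: comm_A_loop_def Inn_def)

definition pw where "pw y n = (Ltr Q m y ^^ n) e"

lemma fpow_in: "y\<in>Q \<Longrightarrow> z\<in>Q \<Longrightarrow> (Ltr Q m y ^^ n) z \<in> Q"
  by (induction n) (auto simp: Ltr_def cl)
lemma pw_in: "y\<in>Q \<Longrightarrow> pw y n \<in> Q" by (simp add: pw_def fpow_in e_in)
lemma pw_Suc: "y\<in>Q \<Longrightarrow> pw y (Suc n) = m y (pw y n)"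
  unfolding pw_def using fpow_in[OF _ e_in, of y n] by (simp add: Ltr_def)
lemma pw0: "pw y 0 = e" by (simp add: pw_def)

lemma pw_add: assumes y: "y\<in>Q" shows "m (pw y n) (pw y k) = pw y (n+k)"
proof -
  let ?f = "Ltr Q m y ^^ n" and ?a = "pw y n"
  define \<phi> where "\<phi> = pinv Q (Ltr Q m ?a) \<circ> ?f"
  have a: "?a \<in> Q" using pw_in y .
  have fe: "?f e = ?a" by (simp add: pw_def)
  have \<phi>z: "\<And>z. z\<in>Q \<Longrightarrow> \<phi> z = ldiv Q m ?a (?f z)"
    using pinv_Ltr a fpow_in y by (simp add: \<phi>_def)
  have "\<phi> \<in> Mlt Q m" unfolding \<phi>_def Mlt_def
    by (rule gen_perm.gen_inv) (use a y in \<open>auto intro: funpow_gen\<close>)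
  moreover have "\<phi> e = e" using \<phi>z[OF e_in] fe a ldiv_eq ru e_in by simp
  ultimately have au: "automorphism Q m \<phi>" by (rule aut)
  have "?f y = ?f (Ltr Q m y e)" using y e_in by (simp add: Ltr_def ru)
  also have "\<dots> = Ltr Q m y (?f e)" by (rule funpow_swap1[symmetric])
  also have "\<dots> = m y ?a" using a fe unfolding Ltr_def by simp
  also have "\<dots> = m ?a y" by (rule comm[OF y a])
  finally have \<phi>y: "\<phi> y = y" using \<phi>z[OF y] ldiv_cancel a y by simp
  have \<phi>p: "\<phi> (pw y k) = pw y k" for k
  proof (induction k)
    case 0 then show ?case using \<open>\<phi> e = e\<close> by (simp only: pw0)
  next
    case (Suc k)
    have 1: "pw y (Suc k) = m y (pw y k)" by (rule pw_Suc[OF y])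
    have 2: "\<phi> (m y (pw y k)) = m (\<phi> y) (\<phi> (pw y k))"
      using au y pw_in[OF y] unfolding automorphism_def by blast
    show ?case by (simp only: 1 2 \<phi>y Suc.IH)
  qed
  have "?f (pw y k) = pw y (n+k)" by (simp only: pw_def funpow_add o_apply)
  moreover have "\<phi> (pw y k) = ldiv Q m ?a (?f (pw y k))" by (rule \<phi>z[OF pw_in[OF y]])
  ultimately have "ldiv Q m ?a (pw y (n+k)) = pw y k" using \<phi>p[of k] by metis
  then show ?thesis using ldiv[OF a pw_in[OF y, of "n+k"]] by metis
qed

lemma pw_period: assumes y: "y\<in>Q" shows "\<exists>N>0. pw y N = e"
proof -
  have "\<not> inj (pw y)"
  proof
    assume "inj (pw y)"
    then have "infinite (range (pw y))" using finite_imageD infinite_UNIV_nat by blast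
    moreover have "range (pw y) \<subseteq> Q" using pw_in y by auto
    ultimately show False using fin finite_subset by blast
  qed
  then obtain i j where "i \<noteq> j" "pw y i = pw y j" by (auto simp: inj_def)
  then obtain i j where ij: "i < j" "pw y i = pw y j" by (metis linorder_neq_iff)
  have "m (pw y i) (pw y (j-i)) = pw y j" using pw_add[OF y, of i "j-i"] ij by simp
  also have "\<dots> = m (pw y i) e" using ij ru pw_in y by simp
  finally have "pw y (j-i) = e" using canc[OF pw_in[OF y] pw_in[OF y] e_in] by blast
  thus ?thesis using ij by (intro exI[of _ "j-i"]) simp
qed

lemma linv_pw: assumes y: "y\<in>Q"
  shows "\<exists>N>0. pw y N = e \<and> linv Q m e y = pw y (N-1)"
proof -
  obtain N where N: "N>0" "pw y N = e" using pw_period y by blast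
  have "m y (pw y (N-1)) = e" using N pw_Suc[OF y, of "N-1"] by simp
  then have "linv Q m e y = pw y (N-1)" unfolding linv_def by (rule ldiv_eq[OF y pw_in[OF y]])
  thus ?thesis using N by blast
qed

lemma linv: "y\<in>Q \<Longrightarrow> linv Q m e y \<in> Q \<and> m y (linv Q m e y) = e"
  unfolding linv_def using ldiv e_in by blast

lemma linv_linv: "y\<in>Q \<Longrightarrow> linv Q m e (linv Q m e y) = y"
proof -
  assume y: "y\<in>Q"
  have i: "linv Q m e y \<in> Q" "m y (linv Q m e y) = e" using linv[OF y] by auto
  have "m (linv Q m e y) y = e" using comm[OF i(1) y] i(2) by simp
  then have "ldiv Q m (linv Q m e y) e = y" by (rule ldiv_eq[OF i(1) y])
  then show ?thesis by (simp only: linv_def[of Q m e "linv Q m e y"])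
qed

lemma circ_sq: assumes y: "y\<in>Q" shows "circ_op Q m e y y = m y y"
proof -
  obtain N where N: "N>0" "pw y N = e" "linv Q m e y = pw y (N-1)" using linv_pw y by blast
  have p1: "pw y 1 = y" using pw_Suc[OF y, of 0] y by (simp add: pw0 ru)
  have p2: "pw y 2 = m y y" using pw_Suc[OF y, of 1] p1 by (simp add: numeral_2_eq_2)
  have p3: "pw y 3 = m y (m y y)" using pw_Suc[OF y, of 2] p2 by (simp add: numeral_3_eq_3)
  have p4: "pw y 4 = m (m y y) (m y y)" using pw_add[OF y, of 2 2] p2 by simp
  have "m (pw y (N-1)) (pw y 4) = pw y (N + 3)" using pw_add[OF y, of "N-1" 4] N by (simp add: add.commute)
  also have "\<dots> = pw y 3" using pw_add[OF y, of N 3] N lu pw_in[OF y] by simp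
  finally have "ldiv Q m (linv Q m e y) (m y (m y y)) = pw y 4"
    using N p3 by (metis ldiv_eq pw_in y)
  then have "circ_op Q m e y y = sqroot Q m (m (m y y) (m y y))" unfolding circ_op_def p4 by simp
  also have "\<dots> = m y y" by (rule sqroot_eq[OF cl[OF y y] refl])
  finally show ?thesis .
qed

lemma circ_inv: assumes x: "x\<in>Q" and z: "z\<in>Q" and c: "circ_op Q m e x z = e"
  shows "z = linv Q m e x"
proof -
  obtain N where N: "N>0" "pw x N = e" "linv Q m e x = pw x (N-1)" using linv_pw x by blast
  let ?i = "linv Q m e x"
  have i: "?i \<in> Q" using linv x by blast
  let ?w = "ldiv Q m ?i (m x (m z z))"
  have w: "?w \<in> Q" "m ?i ?w = m x (m z z)" using ldiv[OF i cl[OF x cl[OF z z]]] by auto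
  have "sqroot Q m ?w = e" using c by (simp add: circ_op_def)
  then have "?w = e" using sqroot[OF w(1)] e_in lu by metis
  then have 1: "m x (m z z) = ?i" using w ru i by simp
  have "m ?i ?i = pw x ((N-1)+(N-1))" by (simp only: N(3) pw_add[OF x])
  moreover have eq: "N + (N-1) = Suc ((N-1)+(N-1))" using N by simp
  have "pw x (N + (N-1)) = m x (pw x ((N-1)+(N-1)))" by (simp only: eq pw_Suc[OF x])
  then have "m x (pw x ((N-1)+(N-1))) = pw x (N + (N-1))" by simp
  moreover have "pw x (N + (N-1)) = ?i" using pw_add[OF x, of N "N-1"] N lu pw_in[OF x] by simp
  ultimately have "m x (m ?i ?i) = m x (m z z)" using 1 by simp
  then have "m ?i ?i = m z z" using canc[OF x cl[OF i i] cl[OF z z]] by blast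
  then have "(\<lambda>w. m w w) z = (\<lambda>w. m w w) ?i" by simp
  then show ?thesis by (rule inj_onD[OF sq_inj _ z i])
qed

end

theorem lemma3p9:
  fixes Q :: "'a set" and m :: "'a \<Rightarrow> 'a \<Rightarrow> 'a" and e :: 'a and K :: "'a set"
  assumes "comm_A_loop Q m e"
    and "finite Q" and "odd (card Q)"
    and "subloop Q (circ_op Q m e) e K"
  shows "subloop Q m e K \<longleftrightarrow>
    (\<forall>\<phi> \<in> Inn Q m e \<inter> gen_perm Q (Ltr Q m ` K). \<phi> ` K = K)"
proof -
  interpret cal Q m e using assms(1-3) by unfold_locales
  have KQ: "K \<subseteq> Q" and Kl: "loop K (circ_op Q m e) e" using assms(4) by (auto simp: subloop_def)
  have finK: "finite K" using KQ fin finite_subset by blast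
  have eK: "e \<in> K" using Kl by (simp add: loop_def)
  have circK: "\<And>a b. a\<in>K \<Longrightarrow> b\<in>K \<Longrightarrow> circ_op Q m e a b \<in> K" using Kl by (simp add: loop_def)
  have circL: "\<And>a. a\<in>K \<Longrightarrow> bij_betw (circ_op Q m e a) K K" using Kl by (simp add: loop_def)
  show ?thesis
  proof
    assume sl: "subloop Q m e K"
    then have lK: "loop K m e" by (simp add: subloop_def)
    have imK: "a \<in> K \<Longrightarrow> m a ` K = K" for a using lK by (simp add: loop_def bij_betw_def)
    have "\<phi> ` K = K" if "\<phi> \<in> gen_perm Q (Ltr Q m ` K)" for \<phi>
      using that
    proof (induction rule: gen_perm.induct)
      case gen_id then show ?case by simp
    next
      case (gen_mult f g)
      then obtain a where a: "a \<in> K" "f = Ltr Q m a" by blast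
      have "f ` K = m a ` K" using a KQ by (auto simp: Ltr_def)
      have "(f \<circ> g) ` K = f ` (g ` K)" by (simp only: image_comp)
      then show ?case using gen_mult a imK \<open>f ` K = m a ` K\<close> by simp
    next
      case (gen_inv f g)
      then obtain a where a: "a \<in> K" "f = Ltr Q m a" by blast
      have aQ: "a \<in> Q" using a KQ by blast
      have "pinv Q f ` K = ldiv Q m a ` K" using a KQ pinv_Ltr aQ
        by (intro image_cong) auto
      also have "\<dots> = K"
      proof
        show "ldiv Q m a ` K \<subseteq> K"
        proof
          fix k assume "k \<in> ldiv Q m a ` K"
          then obtain u where u: "u \<in> K" "k = ldiv Q m a u" by blast
          then obtain v where v: "v \<in> K" "u = m a v" using imK[OF a(1)] by blast
          then show "k \<in> K" using u ldiv_cancel aQ KQ by auto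
        qed
        show "K \<subseteq> ldiv Q m a ` K"
        proof
          fix v assume v: "v \<in> K"
          have "m a v \<in> K" using imK[OF a(1)] v by blast
          moreover have "ldiv Q m a (m a v) = v" using ldiv_cancel aQ v KQ by auto
          ultimately show "v \<in> ldiv Q m a ` K" by force
        qed
      qed
      finally have pK: "pinv Q f ` K = K" .
      have "(pinv Q f \<circ> g) ` K = pinv Q f ` (g ` K)" by (simp only: image_comp)
      then show ?case using gen_inv pK by simp
    qed
    then show "\<forall>\<phi> \<in> Inn Q m e \<inter> gen_perm Q (Ltr Q m ` K). \<phi> ` K = K" by blast
  next
    assume H: "\<forall>\<phi> \<in> Inn Q m e \<inter> gen_perm Q (Ltr Q m ` K). \<phi> ` K = K"
    have HK: "\<phi> ` K = K" if "\<phi> \<in> gen_perm Q (Ltr Q m ` K)" "\<phi> e = e" for \<phi>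
    proof -
      have "\<phi> \<in> Mlt Q m" unfolding Mlt_def by (rule gen_mono[OF that(1)]) (use KQ in auto)
      then show ?thesis using H that by (auto simp: Inn_def)
    qed
    have S1: "m u u \<in> K" if "u \<in> K" for u
      using circK[OF that that] circ_sq that KQ by auto
    have S2: "linv Q m e x \<in> K" if x: "x \<in> K" for x
    proof -
      have "e \<in> circ_op Q m e x ` K" using circL[OF x] eK by (simp add: bij_betw_def)
      then obtain z where z: "z \<in> K" "circ_op Q m e x z = e" by (metis imageE)
      have "z = linv Q m e x" by (rule circ_inv) (use z x KQ in auto)
      then show ?thesis using z by simp
    qed
    have sqK: "(\<lambda>w. m w w) ` K = K"
    proof (rule endo_inj_surj[OF finK])
      show "(\<lambda>w. m w w) ` K \<subseteq> K" using S1 by blast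
      show "inj_on (\<lambda>w. m w w) K" by (rule inj_on_subset[OF sq_inj KQ])
    qed
    have S3: "\<exists>w\<in>K. m w w = y" if "y \<in> K" for y
    proof -
      have "y \<in> (\<lambda>w. m w w) ` K" using sqK that by simp
      then obtain w where "w \<in> K" "y = m w w" by (rule imageE)
      then show ?thesis by blast
    qed
    define P where "P x y = ldiv Q m (linv Q m e x) (m x y)" for x y
    have S4: "P x y \<in> K" if x: "x \<in> K" and y: "y \<in> K" for x y
    proof -
      obtain w where w: "w \<in> K" "m w w = y" using S3 y by blast
      have xQ: "x \<in> Q" and wQ: "w \<in> Q" using x w KQ by auto
      have iQ: "linv Q m e x \<in> Q" using linv[OF xQ] by blast
      have PQ: "P x y \<in> Q" unfolding P_def using ldiv[OF iQ cl[OF xQ]] y KQ by auto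
      have c: "circ_op Q m e x w = sqroot Q m (P x y)" using w by (simp add: circ_op_def P_def)
      have "m (circ_op Q m e x w) (circ_op Q m e x w) = P x y" using c sqroot[OF PQ] by simp
      moreover have "m (circ_op Q m e x w) (circ_op Q m e x w) \<in> K" using S1 circK x w by blast
      ultimately show ?thesis by simp
    qed
    have S5: "P x ` K = K" if x: "x \<in> K" for x
    proof (rule endo_inj_surj[OF finK])
      show "P x ` K \<subseteq> K" using S4 x by blast
      have xQ: "x \<in> Q" using x KQ by auto
      have iQ: "linv Q m e x \<in> Q" using linv xQ by blast
      show "inj_on (P x) K"
      proof
        fix y1 y2 assume y: "y1 \<in> K" "y2 \<in> K" "P x y1 = P x y2"
        have "m x y1 = m (linv Q m e x) (P x y1)" using ldiv[OF iQ cl[OF xQ, of y1]] y KQ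
          by (auto simp: P_def)
        also have "\<dots> = m (linv Q m e x) (P x y2)" using y by simp
        also have "\<dots> = m x y2" using ldiv[OF iQ cl[OF xQ, of y2]] y KQ by (auto simp: P_def)
        finally have eq: "m x y1 = m x y2" .
        have "y1 \<in> Q" "y2 \<in> Q" using y KQ by auto
        then show "y1 = y2" using canc[OF xQ _ _ eq] by blast
      qed
    qed
    have S6: "m (linv Q m e x) (m (linv Q m e x) k) \<in> K" if x: "x \<in> K" and k: "k \<in> K" for x k
    proof -
      let ?i = "linv Q m e x"
      have xQ: "x \<in> Q" using x KQ by auto
      have iK: "?i \<in> K" using S2 x .
      have iQ: "?i \<in> Q" using linv xQ by blast
      define T where "T = Ltr Q m ?i \<circ> (Ltr Q m x \<circ> id)"
      have Tg: "T \<in> gen_perm Q (Ltr Q m ` K)" unfolding T_def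
        by (intro gen_perm.gen_mult gen_perm.gen_id) (use iK x in auto)
      have Tu: "T u = m ?i (m x u)" if "u \<in> Q" for u using that xQ cl by (simp add: T_def Ltr_def)
      have "T e = m ?i x" using Tu[OF e_in] ru[OF xQ] by simp
      also have "\<dots> = e" using comm[OF iQ xQ] linv[OF xQ] by simp
      finally have "T e = e" .
      then have TK: "T ` K = K" using HK Tg by blast
      have "k \<in> P x ` K" using S5[OF x] k by simp
      then have "\<exists>u\<in>K. k = P x u" by (simp only: image_iff)
      then obtain u where u0: "u \<in> K" "k = P x u" by blast
      then have u: "u \<in> K" "P x u = k" by simp_all
      have uQ: "u \<in> Q" using u KQ by auto
      have "m ?i k = m x u" using ldiv[OF iQ cl[OF xQ uQ]] u by (simp add: P_def)
      then have Tu2: "T u = m ?i (m ?i k)" using Tu uQ by simp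
      have "T u \<in> T ` K" using u(1) by (rule imageI)
      then have "T u \<in> K" by (simp only: TK)
      then show ?thesis by (simp only: Tu2)
    qed
    have S7: "m y (m y k) \<in> K" if y: "y \<in> K" and k: "k \<in> K" for y k
    proof -
      have yQ: "y \<in> Q" using y KQ by auto
      show ?thesis using S6[OF S2[OF y] k] by (simp only: linv_linv[OF yQ])
    qed
    have S8: "m (m y y) k \<in> K" if y: "y \<in> K" and k: "k \<in> K" for y k
    proof -
      have yQ: "y \<in> Q" using y KQ by auto
      have yyK: "m y y \<in> K" using S1 y .
      have yyQ: "m y y \<in> Q" using cl[OF yQ yQ] .
      define \<phi> where "\<phi> = pinv Q (Ltr Q m (m y y)) \<circ> (Ltr Q m y \<circ> (Ltr Q m y \<circ> id))"
      have g: "\<phi> \<in> gen_perm Q (Ltr Q m ` K)" unfolding \<phi>_def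
        by (intro gen_perm.gen_inv gen_perm.gen_mult gen_perm.gen_id) (use yyK y in auto)
      have \<phi>u: "\<phi> u = ldiv Q m (m y y) (m y (m y u))" if "u \<in> Q" for u
        using that yQ cl pinv_Ltr[OF yyQ] by (simp add: \<phi>_def Ltr_def)
      have "\<phi> e = ldiv Q m (m y y) (m y y)" using \<phi>u[OF e_in] ru[OF yQ] by simp
      also have "\<dots> = e" by (rule ldiv_eq[OF yyQ e_in ru[OF yyQ]])
      finally have "\<phi> e = e" .
      then have \<phi>K: "\<phi> ` K = K" using HK g by blast
      have "k \<in> \<phi> ` K" using \<phi>K k by simp
      then have "\<exists>u\<in>K. k = \<phi> u" by (simp only: image_iff)
      then obtain u where u0: "u \<in> K" "k = \<phi> u" by blast
      then have u: "u \<in> K" "\<phi> u = k" by simp_all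
      have uQ: "u \<in> Q" using u KQ by auto
      have ld: "ldiv Q m (m y y) (m y (m y u)) = k" using \<phi>u[OF uQ] u(2) by simp
      have "m (m y y) k = m y (m y u)" using ldiv[OF yyQ cl[OF yQ cl[OF yQ uQ]]] unfolding ld by simp
      then show ?thesis using S7[OF y u(1)] by simp
    qed
    have clK: "m a b \<in> K" if a: "a \<in> K" and b: "b \<in> K" for a b
    proof -
      obtain w where w: "w \<in> K" "m w w = a" using S3[OF a] by blast
      show ?thesis using S8[OF w(1) b] w(2) by simp
    qed
    have injK: "inj_on (m x) K" if "x \<in> K" for x
    proof
      fix a b assume "a \<in> K" "b \<in> K" "m x a = m x b"
      then show "a = b" using canc[of x a b] that KQ by blast
    qed
    have bK: "bij_betw (m x) K K" if x: "x \<in> K" for x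
    proof -
      have "m x ` K \<subseteq> K" using clK[OF x] by blast
      then have "m x ` K = K" by (rule endo_inj_surj[OF finK _ injK[OF x]])
      then show ?thesis unfolding bij_betw_def using injK[OF x] by blast
    qed
    have bK2: "bij_betw (\<lambda>y. m y x) K K" if x: "x \<in> K" for x
    proof -
      have "bij_betw (\<lambda>y. m y x) K K = bij_betw (m x) K K"
      proof (rule bij_betw_cong)
        fix y assume "y \<in> K"
        then have "y \<in> Q" "x \<in> Q" using x KQ by auto
        then show "m y x = m x y" by (rule comm)
      qed
      then show ?thesis using bK[OF x] by (simp only:)
    qed
    have "loop K m e" unfolding loop_def
    proof (intro conjI ballI)
      show "e \<in> K" by (rule eK)
    next
      fix x y assume "x \<in> K" "y \<in> K" then show "m x y \<in> K" by (rule clK)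
    next
      fix x assume "x \<in> K" then show "m e x = x" using lu KQ by blast
    next
      fix x assume "x \<in> K" then show "m x e = x" using ru KQ by blast
    next
      fix x assume "x \<in> K" then show "bij_betw (m x) K K" by (rule bK)
    next
      fix x assume "x \<in> K" then show "bij_betw (\<lambda>y. m y x) K K" by (rule bK2)
    qed
    then show "subloop Q m e K" using KQ by (simp add: subloop_def)
  qed
qed

end
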